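(* Consider the contextual learning setting in which all contexts $\sigma_1,\dots,\sigma_T$ lie in a known finite set $P\subseteq\Sigma$. Let $\Gamma\in[0,1]^{|\mathcal X|\times N}$ be $(\kappa,\delta)$-admissible, $\epsilon\ge0$, and $D$ a $\big(\rho,\frac{1+2\epsilon}{\delta}\big)$-dispersed distribution. Run Generalized FTPL in the contextual setting with translation matrix $\Gamma^P$ (one perturbation $\alpha_{\sigma,j}\sim D$ per column $(\sigma,j)\in P\times[N]$). Then the chosen policies $\pi_1,\dots,\pi_{T+1}$ satisfy \[ \mathbb E\Big[\sum_{t=1}^T f_c(\pi_{t+1},(\sigma_t,y_t))-f_c(\pi_t,(\sigma_t,y_t))\Big]\le 2TN\kappa\rho . \]
   Context: Original setting: finite learner action set $\mathcal X$, adversary action set $\mathcal Y$, payoff $f:\mathcal X\times\mathcal Y\to[0,1]$. Contextual setting: policy class $\Pi$ of maps $\Sigma\to\mathcal X$, adversary actions $(\sigma_t,y_t)\in\Sigma\times\mathcal Y$ fixed in advance, payoff $f_c(\pi,(\sigma,y))=f(\pi(\sigma),y)$. $\Gamma^P$: matrix with rows indexed by $\pi\in\Pi$, columns by $(\sigma,j)\in P\times[N]$, entries $\Gamma^P_{\pi,(\sigma,j)}=\Gamma_{\pi(\sigma),j}$. Generalized FTPL in the contextual setting: draw the perturbation vector $\vec\alpha$ once with i.i.d. $D$ entries; for $t=1,\dots,T+1$, $\pi_t$ is any policy with $\sum_{\tau<t}f_c(\pi_t,(\sigma_\tau,y_\tau))+\vec\alpha\cdot\Gamma^P_{\pi_t}\ge\sum_{\tau<t}f_c(\pi,(\sigma_\tau,y_\tau))+\vec\alpha\cdot\Gamma^P_{\pi}-\epsilon$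 for all $\pi\in\Pi$. $\Gamma$ is $(\kappa,\delta)$-admissible if its rows are distinct, each column has at most $\kappa$ distinct values, and distinct values in a column differ by at least $\delta$. $D$ is $(\rho,L)$-dispersed if every interval of length $L$ has probability at most $\rho$. *)

theory Defs
  imports "HOL-Probability.Probability"
begin

definition admissible :: "('x \<Rightarrow> nat \<Rightarrow> real) \<Rightarrow> nat \<Rightarrow> nat \<Rightarrow> real \<Rightarrow> bool" where
  "admissible G N \<kappa> \<delta> \<longleftrightarrow>
     (\<forall>x x'. x \<noteq> x' \<longrightarrow> (\<exists>j<N. G x j \<noteq> G x' j)) \<and>
     (\<forall>j<N. card (range (\<lambda>x. G x j)) \<le> \<kappa>) \<and>
     (\<forall>j<N. \<forall>x x'. G x j \<noteq> G x' j \<longrightarrow> \<bar>G x j - G x' j\<bar> \<ge> \<delta>)"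

definition dispersed :: "real measure \<Rightarrow> real \<Rightarrow> real \<Rightarrow> bool" where
  "dispersed D \<rho> L \<longleftrightarrow> (\<forall>a. measure D {a..a + L} \<le> \<rho>)"

text \<open>Perturbation term alpha . G^P_pi, columns (sigma, j) in P x [N].\<close>
definition pert :: "('x \<Rightarrow> nat \<Rightarrow> real) \<Rightarrow> 's set \<Rightarrow> nat \<Rightarrow> ('s \<times> nat \<Rightarrow> real) \<Rightarrow> ('s \<Rightarrow> 'x) \<Rightarrow> real" where
  "pert G P N \<alpha> \<pi> = (\<Sum>c\<in>P \<times> {..<N}. \<alpha> c * G (\<pi> (fst c)) (snd c))"

definition cum_payoff :: "('x \<Rightarrow> 'y \<Rightarrow> real) \<Rightarrow> (nat \<Rightarrow> 's) \<Rightarrow> (nat \<Rightarrow> 'y) \<Rightarrow> nat \<Rightarrow> ('s \<Rightarrow> 'x) \<Rightarrow> real" where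
  "cum_payoff f \<sigma> y t \<pi> = (\<Sum>\<tau>\<in>{1..<t}. f (\<pi> (\<sigma> \<tau>)) (y \<tau>))"

definition ftpl_choice where
  "ftpl_choice f \<sigma> y G P N Pol \<epsilon> \<alpha> t \<pi>t \<longleftrightarrow> \<pi>t \<in> Pol \<and>
     (\<forall>\<pi>\<in>Pol. cum_payoff f \<sigma> y t \<pi>t + pert G P N \<alpha> \<pi>t
               \<ge> cum_payoff f \<sigma> y t \<pi> + pert G P N \<alpha> \<pi> - \<epsilon>)"

end

theory Submission
  imports Defs
begin


lemma interval_cover:
  fixes S :: "real set"
  assumes L: "0 \<le> L" and H: "\<And>a b. a \<in> S \<Longrightarrow> b \<in> S \<Longrightarrow> a < b \<Longrightarrow> b - a \<le> L"
  shows "\<exists>s. S \<subseteq> {s..s+L}"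
proof (cases "S = {}")
  case True then show ?thesis by auto
next
  case False
  then obtain a0 where a0: "a0 \<in> S" by auto
  have bdd: "bdd_below S"
  proof
    fix b assume "b \<in> S"
    show "a0 - L \<le> b"
    proof (cases "b < a0")
      case True with H[OF \<open>b \<in> S\<close> a0] show ?thesis by simp
    next
      case False with L show ?thesis by simp
    qed
  qed
  have "S \<subseteq> {Inf S..Inf S + L}"
  proof
    fix b assume b: "b \<in> S"
    have "Inf S \<le> b" using cInf_lower[OF b bdd] .
    moreover have "b - L \<le> Inf S"
    proof (rule cInf_greatest[OF False])
      fix a assume a: "a \<in> S"
      show "b - L \<le> a"
      proof (cases "a < b")
        case True with H[OF a b] show ?thesis by simp
      next
        case False with L show ?thesis by simp
      qed
    qed
    ultimately show "b \<in> {Inf S..Inf S + L}" by simp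
  qed
  then show ?thesis by blast
qed

lemma gap_real:
  fixes a b uu vv XX YY wX wY \<epsilon> \<delta> :: real
  assumes h1: "YY + b * vv - \<epsilon> \<le> XX + b * uu" and h2: "XX + wX + a * uu - \<epsilon> \<le> YY + wY + a * vv"
    and w: "wY - wX \<le> 1" and uv: "uu + \<delta> \<le> vv" and ab: "a < b" and d: "\<delta> > 0"
  shows "b - a \<le> (1 + 2*\<epsilon>)/\<delta>"
proof -
  have "(b - a) * (vv - uu) \<le> 1 + 2*\<epsilon>"
    using h1 h2 w by (simp add: algebra_simps)
  moreover have "(b - a) * \<delta> \<le> (b - a) * (vv - uu)"
    using uv ab by (intro mult_left_mono) auto
  ultimately have "(b - a) * \<delta> \<le> 1 + 2*\<epsilon>" by linarith
  then show ?thesis using d by (simp add: pos_le_divide_eq)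
qed

lemma pred_pair_sets:
  fixes g1 g2 :: "'a \<Rightarrow> 'x::finite"
  assumes g1: "g1 \<in> M \<rightarrow>\<^sub>M count_space UNIV" and g2: "g2 \<in> M \<rightarrow>\<^sub>M count_space UNIV"
  shows "{\<alpha> \<in> space M. R (g1 \<alpha>) (g2 \<alpha>)} \<in> sets M"
proof -
  have "{\<alpha> \<in> space M. R (g1 \<alpha>) (g2 \<alpha>)} =
     (\<Union>x1\<in>UNIV. \<Union>x2\<in>UNIV. if R x1 x2 then (g1 -` {x1} \<inter> space M) \<inter> (g2 -` {x2} \<inter> space M) else {})"
    by auto
  also have "\<dots> \<in> sets M"
    using g1 g2 by (intro sets.finite_UN) (auto intro!: measurable_sets)
  finally show ?thesis .
qed

lemma section_bound:
  fixes D :: "real measure" and I :: "'i set" and E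
  assumes D: "prob_space D" and i: "i \<in> I" and E: "E \<in> sets (PiM I (\<lambda>_. D))" and r: "0 \<le> r"
    and sec: "\<And>z. z \<in> space (PiM (I - {i}) (\<lambda>_. D)) \<Longrightarrow>
                  \<exists>B\<in>sets D. {a \<in> space D. z(i:=a) \<in> E} \<subseteq> B \<and> measure D B \<le> r"
  shows "measure (PiM I (\<lambda>_. D)) E \<le> r"
proof -
  define J where "J = I - {i}"
  have IJ: "insert i J = I" using i by (auto simp: J_def)
  interpret D: prob_space D by fact
  interpret PJ: prob_space "PiM J (\<lambda>_. D)" using D by (intro prob_space_PiM)
  interpret PI: prob_space "PiM I (\<lambda>_. D)" using D by (intro prob_space_PiM)
  interpret pair_prob_space D "PiM J (\<lambda>_. D)" by unfold_locales
  define F :: "real \<times> ('i \<Rightarrow> real) \<Rightarrow> ('i \<Rightarrow> real)" where "F = (\<lambda>(x, X). X(i := x))"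
  have eq: "distr (D \<Otimes>\<^sub>M PiM J (\<lambda>_. D)) (PiM I (\<lambda>_. D)) F = PiM I (\<lambda>_. D)"
    using distr_pair_PiM_eq_PiM[of J "\<lambda>_. D" i] D IJ by (simp add: F_def)
  have Fm: "F \<in> (D \<Otimes>\<^sub>M PiM J (\<lambda>_. D)) \<rightarrow>\<^sub>M PiM I (\<lambda>_. D)"
  proof -
    have "(\<lambda>(f, y). f(i := y)) \<in> (PiM J (\<lambda>_. D) \<Otimes>\<^sub>M D) \<rightarrow>\<^sub>M PiM (insert i J) (\<lambda>_. D)"
      by (rule measurable_add_dim)
    then have "(\<lambda>(f, y). f(i := y)) \<circ> (\<lambda>(x,X). (X,x)) \<in> (D \<Otimes>\<^sub>M PiM J (\<lambda>_. D)) \<rightarrow>\<^sub>M PiM (insert i J) (\<lambda>_. D)"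
      by (intro measurable_comp[OF measurable_pair_swap']) 
    then show ?thesis by (simp add: F_def IJ o_def case_prod_beta)
  qed
  have "emeasure (PiM I (\<lambda>_. D)) E = emeasure (D \<Otimes>\<^sub>M PiM J (\<lambda>_. D)) (F -` E \<inter> space (D \<Otimes>\<^sub>M PiM J (\<lambda>_. D)))"
    by (subst eq[symmetric]) (rule emeasure_distr[OF Fm E])
  also have "\<dots> = (\<integral>\<^sup>+z. emeasure D ((\<lambda>x. (x, z)) -` (F -` E \<inter> space (D \<Otimes>\<^sub>M PiM J (\<lambda>_. D)))) \<partial>PiM J (\<lambda>_. D))"
    by (rule emeasure_pair_measure_alt2) (rule measurable_sets[OF Fm E])
  also have "\<dots> \<le> (\<integral>\<^sup>+z. ennreal r \<partial>PiM J (\<lambda>_. D))"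
  proof (rule nn_integral_mono)
    fix z assume z: "z \<in> space (PiM J (\<lambda>_. D))"
    then obtain B where B: "B \<in> sets D" "{a \<in> space D. z(i:=a) \<in> E} \<subseteq> B" "measure D B \<le> r"
      using sec J_def by blast
    have "(\<lambda>x. (x, z)) -` (F -` E \<inter> space (D \<Otimes>\<^sub>M PiM J (\<lambda>_. D))) \<subseteq> B"
      using B(2) z by (auto simp: F_def space_pair_measure)
    then have "emeasure D ((\<lambda>x. (x, z)) -` (F -` E \<inter> space (D \<Otimes>\<^sub>M PiM J (\<lambda>_. D)))) \<le> emeasure D B"
      by (rule emeasure_mono) (rule B(1))
    also have "\<dots> = ennreal (measure D B)" by (simp add: D.emeasure_eq_measure)
    also have "\<dots> \<le> ennreal r" using B(3) by (rule ennreal_leI)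
    finally show "emeasure D ((\<lambda>x. (x, z)) -` (F -` E \<inter> space (D \<Otimes>\<^sub>M PiM J (\<lambda>_. D)))) \<le> ennreal r" .
  qed
  also have "\<dots> = ennreal r" by (simp add: PJ.emeasure_space_1)
  finally have "ennreal (measure (PiM I (\<lambda>_. D)) E) \<le> ennreal r"
    by (simp add: PI.emeasure_eq_measure)
  then show ?thesis using r by simp
qed

lemma pert_split:
  assumes "finite P" "i \<in> P \<times> {..<N}"
  shows "pert G P N (z(i:=a)) \<pi> = a * G (\<pi> (fst i)) (snd i) +
           (\<Sum>c\<in>P \<times> {..<N} - {i}. z c * G (\<pi> (fst c)) (snd c))"
proof -
  have "pert G P N (z(i:=a)) \<pi> = (z(i:=a)) i * G (\<pi> (fst i)) (snd i) +
           (\<Sum>c\<in>P \<times> {..<N} - {i}. (z(i:=a)) c * G (\<pi> (fst c)) (snd c))"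
    unfolding pert_def using assms by (subst sum.remove[of _ i]) auto
  also have "(\<Sum>c\<in>P \<times> {..<N} - {i}. (z(i:=a)) c * G (\<pi> (fst c)) (snd c)) =
      (\<Sum>c\<in>P \<times> {..<N} - {i}. z c * G (\<pi> (fst c)) (snd c))"
    by (rule sum.cong) auto
  finally show ?thesis by (simp only: fun_upd_same)
qed

lemma cum_payoff_Suc:
  assumes "1 \<le> t"
  shows "cum_payoff f \<sigma> y (Suc t) \<pi> = cum_payoff f \<sigma> y t \<pi> + f (\<pi> (\<sigma> t)) (y t)"
proof -
  have "{1..<Suc t} = insert t {1..<t}" using assms by auto
  then show ?thesis unfolding cum_payoff_def by simp
qed


theorem lemma4p3:
  fixes f :: "'x::finite \<Rightarrow> 'y \<Rightarrow> real"
    and G :: "'x \<Rightarrow> nat \<Rightarrow> real"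
    and Pol :: "('s \<Rightarrow> 'x) set"
    and P :: "'s set"
    and \<sigma> :: "nat \<Rightarrow> 's" and y :: "nat \<Rightarrow> 'y"
    and D :: "real measure"
    and pol :: "nat \<Rightarrow> ('s \<times> nat \<Rightarrow> real) \<Rightarrow> ('s \<Rightarrow> 'x)"
    and N T \<kappa> :: nat and \<delta> \<epsilon> \<rho> :: real
  assumes f_range: "\<And>x y. 0 \<le> f x y \<and> f x y \<le> 1"
    and P_fin: "finite P"
    and ctx: "\<And>t. t \<in> {1..T} \<Longrightarrow> \<sigma> t \<in> P"
    and Gamma_range: "\<And>x j. j < N \<Longrightarrow> 0 \<le> G x j \<and> G x j \<le> 1"
    and adm: "admissible G N \<kappa> \<delta>"
    and delta_pos: "\<delta> > 0"
    and eps: "\<epsilon> \<ge> 0"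
    and D_prob: "prob_space D" and D_borel: "sets D = sets borel"
    and disp: "dispersed D \<rho> ((1 + 2 * \<epsilon>) / \<delta>)"
    and choice: "\<And>\<alpha> t. \<alpha> \<in> space (PiM (P \<times> {..<N}) (\<lambda>_. D)) \<Longrightarrow> t \<in> {1..T+1} \<Longrightarrow>
                   ftpl_choice f \<sigma> y G P N Pol \<epsilon> \<alpha> t (pol t \<alpha>)"
    and meas: "\<And>t s. t \<in> {1..T+1} \<Longrightarrow> s \<in> P \<Longrightarrow>
                 (\<lambda>\<alpha>. pol t \<alpha> s) \<in> measurable (PiM (P \<times> {..<N}) (\<lambda>_. D)) (count_space UNIV)"
  shows "(\<integral>\<alpha>. (\<Sum>t\<in>{1..T}. f (pol (Suc t) \<alpha> (\<sigma> t)) (y t) - f (pol t \<alpha> (\<sigma> t)) (y t))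
            \<partial>(PiM (P \<times> {..<N}) (\<lambda>_. D)))
         \<le> 2 * real T * real N * real \<kappa> * \<rho>"
proof -
  define I where "I = P \<times> {..<N}"
  define M where "M = PiM I (\<lambda>_. D)"
  interpret D: prob_space D by fact
  interpret PM: prob_space M unfolding M_def using D_prob by (intro prob_space_PiM)
  have spD: "space D = UNIV" using sets_eq_imp_space_eq[OF D_borel] by simp
  have finI: "finite I" using P_fin by (simp add: I_def)
  define L where "L = (1 + 2 * \<epsilon>) / \<delta>"
  have L0: "0 \<le> L" using eps delta_pos by (simp add: L_def)
  have rho0: "0 \<le> \<rho>"
    using disp unfolding dispersed_def L_def[symmetric] by (meson measure_nonneg order_trans)
  have gap: "\<And>x x' j. j < N \<Longrightarrow> G x j \<noteq> G x' j \<Longrightarrow> \<delta> \<le> \<bar>G x j - G x' j\<bar>"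
    using adm unfolding admissible_def by blast
  have cardV: "\<And>j. j < N \<Longrightarrow> card (range (\<lambda>x. G x j)) \<le> \<kappa>"
    using adm unfolding admissible_def by blast
  have rows: "\<And>x x'. x \<noteq> x' \<Longrightarrow> \<exists>j<N. G x j \<noteq> G x' j"
    using adm unfolding admissible_def by blast
  have measpol: "\<And>t s. t \<in> {1..T+1} \<Longrightarrow> s \<in> P \<Longrightarrow> (\<lambda>\<alpha>. pol t \<alpha> s) \<in> M \<rightarrow>\<^sub>M count_space UNIV"
    using meas unfolding M_def I_def by blast
  have col: "measure M {\<alpha> \<in> space M. G (pol (Suc t) \<alpha> (\<sigma> t)) j \<noteq> G (pol t \<alpha> (\<sigma> t)) j} \<le> 2 * real \<kappa> * \<rho>"
    if t: "t \<in> {1..T}" and j: "j < N" for t j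
  proof -
    define s where "s = \<sigma> t"
    have sP: "s \<in> P" using ctx[OF t] by (simp add: s_def)
    define i where "i = (s, j)"
    have iI: "i \<in> I" using sP j by (simp add: I_def i_def)
    define E where "E = {\<alpha> \<in> space M. G (pol (Suc t) \<alpha> s) j \<noteq> G (pol t \<alpha> s) j}"
    have Esets: "E \<in> sets M" unfolding E_def
      by (rule pred_pair_sets[OF measpol measpol]) (use t sP in auto)
    have "measure M E \<le> 2 * real \<kappa> * \<rho>"
      unfolding M_def
    proof (rule section_bound[OF D_prob iI])
      show "E \<in> sets (PiM I (\<lambda>_. D))" using Esets by (simp add: M_def)
      show "0 \<le> 2 * real \<kappa> * \<rho>" using rho0 by simp
    next
      fix z assume z: "z \<in> space (PiM (I - {i}) (\<lambda>_. D))"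
      have zs: "\<And>a. z(i:=a) \<in> space M"
        using z iI by (auto simp: M_def space_PiM PiE_iff spD extensional_def)
      define pt where "pt a = pol t (z(i:=a))" for a
      define pt1 where "pt1 a = pol (Suc t) (z(i:=a))" for a
      define g where "g \<pi> = G (\<pi> s) j" for \<pi> :: "'s \<Rightarrow> 'x"
      define A where "A \<pi> = cum_payoff f \<sigma> y t \<pi> + (\<Sum>c\<in>I - {i}. z c * G (\<pi> (fst c)) (snd c))" for \<pi>
      define w where "w \<pi> = f (\<pi> s) (y t)" for \<pi> :: "'s \<Rightarrow> 'x"
      have pertz: "\<And>a \<pi>. pert G P N (z(i:=a)) \<pi> = a * g \<pi> + (\<Sum>c\<in>I - {i}. z c * G (\<pi> (fst c)) (snd c))"
        using pert_split[OF P_fin iI[unfolded I_def]] by (simp add: g_def i_def I_def)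
      have opt1: "pt a \<in> Pol \<and> (\<forall>\<pi>\<in>Pol. A \<pi> + a * g \<pi> - \<epsilon> \<le> A (pt a) + a * g (pt a))" for a
      proof -
        have "ftpl_choice f \<sigma> y G P N Pol \<epsilon> (z(i:=a)) t (pt a)"
          unfolding pt_def using choice[OF zs[of a, unfolded M_def I_def]] t by auto
        then show ?thesis unfolding ftpl_choice_def pertz A_def by (auto simp: algebra_simps)
      qed
      have opt2: "pt1 a \<in> Pol \<and> (\<forall>\<pi>\<in>Pol. A \<pi> + w \<pi> + a * g \<pi> - \<epsilon> \<le> A (pt1 a) + w (pt1 a) + a * g (pt1 a))" for a
      proof -
        have "ftpl_choice f \<sigma> y G P N Pol \<epsilon> (z(i:=a)) (Suc t) (pt1 a)"
          unfolding pt1_def using choice[OF zs[of a, unfolded M_def I_def]] t by auto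
        moreover have "\<And>\<pi>. cum_payoff f \<sigma> y (Suc t) \<pi> = cum_payoff f \<sigma> y t \<pi> + w \<pi>"
          using t by (simp add: cum_payoff_Suc w_def s_def)
        ultimately show ?thesis unfolding ftpl_choice_def pertz A_def by (auto simp: algebra_simps)
      qed
      have w01: "\<And>\<pi>. 0 \<le> w \<pi> \<and> w \<pi> \<le> 1" using f_range by (simp add: w_def)
      define Sup where "Sup c = {a. g (pt a) = c \<and> c + \<delta> \<le> g (pt1 a)}" for c
      define Sdn where "Sdn c = {a. g (pt a) = c \<and> g (pt1 a) + \<delta> \<le> c}" for c
      have "\<exists>s. Sup c \<subseteq> {s..s+L}" for c
      proof (rule interval_cover[OF L0])
        fix a b assume a: "a \<in> Sup c" and b: "b \<in> Sup c" and ab: "a < b"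
        let ?p = "pt b" and ?q = "pt1 a"
        show "b - a \<le> L" unfolding L_def
        proof (rule gap_real[OF _ _ _ _ ab delta_pos])
          show "A ?q + b * g ?q - \<epsilon> \<le> A ?p + b * g ?p" using opt1[of b] opt2[of a] by blast
          show "A ?p + w ?p + a * g ?p - \<epsilon> \<le> A ?q + w ?q + a * g ?q" using opt1[of b] opt2[of a] by blast
          show "w ?q - w ?p \<le> 1" using w01[of ?q] w01[of ?p] by linarith
          show "g ?p + \<delta> \<le> g ?q" using a b by (simp add: Sup_def)
        qed
      qed
      then obtain su where su: "\<And>c. Sup c \<subseteq> {su c..su c+L}" by metis
      have "\<exists>s. Sdn c \<subseteq> {s..s+L}" for c
      proof (rule interval_cover[OF L0])
        fix a b assume a: "a \<in> Sdn c" and b: "b \<in> Sdn c" and ab: "a < b"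
        let ?p = "pt a" and ?q = "pt1 b"
        show "b - a \<le> L" unfolding L_def
        proof (rule gap_real[OF _ _ _ _ ab delta_pos])
          show "(A ?p + w ?p) + b * g ?p - \<epsilon> \<le> (A ?q + w ?q) + b * g ?q" using opt1[of a] opt2[of b] by blast
          show "(A ?q + w ?q) + - w ?q + a * g ?q - \<epsilon> \<le> (A ?p + w ?p) + - w ?p + a * g ?p"
            using opt1[of a] opt2[of b] by auto
          show "- w ?p - - w ?q \<le> 1" using w01[of ?q] w01[of ?p] by linarith
          show "g ?q + \<delta> \<le> g ?p" using a b by (simp add: Sdn_def)
        qed
      qed
      then obtain sd where sd: "\<And>c. Sdn c \<subseteq> {sd c..sd c+L}" by metis
      define V where "V = range (\<lambda>x. G x j)"
      have finV: "finite V" by (simp add: V_def)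
      define B where "B = (\<Union>c\<in>V. {su c..su c+L} \<union> {sd c..sd c+L})"
      have Bsets: "B \<in> sets D" unfolding B_def using D_borel by (intro sets.finite_UN finV) auto
      show "\<exists>B\<in>sets D. {a \<in> space D. z(i:=a) \<in> E} \<subseteq> B \<and> measure D B \<le> 2 * real \<kappa> * \<rho>"
      proof (intro bexI conjI)
        show "B \<in> sets D" by fact
        show "{a \<in> space D. z(i:=a) \<in> E} \<subseteq> B"
        proof
          fix a assume "a \<in> {a \<in> space D. z(i:=a) \<in> E}"
          then have ne: "g (pt1 a) \<noteq> g (pt a)" by (simp add: E_def pt_def pt1_def g_def)
          have cV: "g (pt a) \<in> V" by (simp add: V_def g_def)
          have "\<delta> \<le> \<bar>g (pt1 a) - g (pt a)\<bar>" using gap[OF j] ne by (simp add: g_def)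
          then have "a \<in> Sup (g (pt a)) \<or> a \<in> Sdn (g (pt a))" by (auto simp: Sup_def Sdn_def)
          then show "a \<in> B" using su sd cV unfolding B_def by blast
        qed
        have "measure D B \<le> (\<Sum>c\<in>V. measure D ({su c..su c+L} \<union> {sd c..sd c+L}))"
          unfolding B_def using D_borel by (intro measure_UNION_le finV) auto
        also have "\<dots> \<le> (\<Sum>c\<in>V. 2 * \<rho>)"
        proof (rule sum_mono)
          fix c assume "c \<in> V"
          have "measure D ({su c..su c+L} \<union> {sd c..sd c+L}) \<le> measure D {su c..su c+L} + measure D {sd c..sd c+L}"
            using D_borel by (intro measure_Un_le) auto
          also have "\<dots> \<le> 2 * \<rho>" using disp unfolding dispersed_def L_def[symmetric]
            by (smt (verit))
          finally show "measure D ({su c..su c+L} \<union> {sd c..sd c+L}) \<le> 2 * \<rho>" .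
        qed
        also have "\<dots> = real (card V) * (2 * \<rho>)" by simp
        also have "\<dots> \<le> real \<kappa> * (2 * \<rho>)"
          using cardV[OF j] rho0 by (intro mult_right_mono) (auto simp: V_def)
        finally show "measure D B \<le> 2 * real \<kappa> * \<rho>" by simp
      qed
    qed
    then show ?thesis by (simp add: E_def s_def)
  qed
  define Dt where "Dt t = {\<alpha> \<in> space M. pol (Suc t) \<alpha> (\<sigma> t) \<noteq> pol t \<alpha> (\<sigma> t)}" for t
  have Dtm: "measure M (Dt t) \<le> real N * (2 * real \<kappa> * \<rho>)" if t: "t \<in> {1..T}" for t
  proof -
    let ?E = "\<lambda>j. {\<alpha> \<in> space M. G (pol (Suc t) \<alpha> (\<sigma> t)) j \<noteq> G (pol t \<alpha> (\<sigma> t)) j}"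
    have Es: "?E j \<in> sets M" for j
      by (rule pred_pair_sets[OF measpol measpol]) (use t ctx[OF t] in auto)
    have "Dt t \<subseteq> (\<Union>j\<in>{..<N}. ?E j)"
      unfolding Dt_def using rows by fastforce
    then have "measure M (Dt t) \<le> measure M (\<Union>j\<in>{..<N}. ?E j)"
      using Es by (intro PM.finite_measure_mono) auto
    also have "\<dots> \<le> (\<Sum>j\<in>{..<N}. measure M (?E j))"
      by (rule measure_UNION_le) (use Es in auto)
    also have "\<dots> \<le> (\<Sum>j\<in>{..<N}. 2 * real \<kappa> * \<rho>)"
      using col[OF t] by (intro sum_mono) auto
    finally show ?thesis by simp
  qed
  have hm: "(\<lambda>\<alpha>. f (pol t' \<alpha> (\<sigma> t)) (y t)) \<in> borel_measurable M"
    if "t' \<in> {1..T+1}" "t \<in> {1..T}" for t t'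
    using measurable_compose[OF measpol[OF that(1) ctx[OF that(2)]], of "\<lambda>x. f x (y t)" borel] by simp
  have hint: "integrable M (\<lambda>\<alpha>. f (pol (Suc t) \<alpha> (\<sigma> t)) (y t) - f (pol t \<alpha> (\<sigma> t)) (y t))"
    if t: "t \<in> {1..T}" for t
  proof (rule PM.integrable_const_bound[where B=1])
    show "AE x in M. norm (f (pol (Suc t) x (\<sigma> t)) (y t) - f (pol t x (\<sigma> t)) (y t)) \<le> 1"
      proof (intro AE_I2)
      fix x show "norm (f (pol (Suc t) x (\<sigma> t)) (y t) - f (pol t x (\<sigma> t)) (y t)) \<le> 1"
        using f_range[of "pol (Suc t) x (\<sigma> t)" "y t"] f_range[of "pol t x (\<sigma> t)" "y t"] by auto
    qed
    show "(\<lambda>\<alpha>. f (pol (Suc t) \<alpha> (\<sigma> t)) (y t) - f (pol t \<alpha> (\<sigma> t)) (y t)) \<in> borel_measurable M"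
      using hm[of "Suc t" t] hm[of t t] t by (intro borel_measurable_diff) auto
  qed
  have hle: "(\<integral>\<alpha>. f (pol (Suc t) \<alpha> (\<sigma> t)) (y t) - f (pol t \<alpha> (\<sigma> t)) (y t) \<partial>M) \<le> real N * (2 * real \<kappa> * \<rho>)"
    if t: "t \<in> {1..T}" for t
  proof -
    have Ds: "Dt t \<in> sets M" unfolding Dt_def
      by (rule pred_pair_sets[OF measpol measpol]) (use t ctx[OF t] in auto)
    have "(\<integral>\<alpha>. f (pol (Suc t) \<alpha> (\<sigma> t)) (y t) - f (pol t \<alpha> (\<sigma> t)) (y t) \<partial>M) \<le> (\<integral>\<alpha>. indicator (Dt t) \<alpha> \<partial>M)"
    proof (rule integral_mono[OF hint[OF t]])
      show "integrable M (indicator (Dt t) :: _ \<Rightarrow> real)" using Ds by (simp add: PM.emeasure_eq_measure)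
      fix \<alpha> assume "\<alpha> \<in> space M"
      then show "f (pol (Suc t) \<alpha> (\<sigma> t)) (y t) - f (pol t \<alpha> (\<sigma> t)) (y t) \<le> indicator (Dt t) \<alpha>"
        using f_range[of "pol (Suc t) \<alpha> (\<sigma> t)" "y t"] f_range[of "pol t \<alpha> (\<sigma> t)" "y t"]
        by (auto simp: Dt_def indicator_def)
    qed
    also have "\<dots> = measure M (Dt t)" using Ds by (simp add: Int_absorb2 sets.sets_into_space)
    also have "\<dots> \<le> real N * (2 * real \<kappa> * \<rho>)" by (rule Dtm[OF t])
    finally show ?thesis .
  qed
  have "(\<integral>\<alpha>. (\<Sum>t\<in>{1..T}. f (pol (Suc t) \<alpha> (\<sigma> t)) (y t) - f (pol t \<alpha> (\<sigma> t)) (y t)) \<partial>M)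
      = (\<Sum>t\<in>{1..T}. (\<integral>\<alpha>. f (pol (Suc t) \<alpha> (\<sigma> t)) (y t) - f (pol t \<alpha> (\<sigma> t)) (y t) \<partial>M))"
    by (rule Bochner_Integration.integral_sum[where I="{1..T}" and M=M and f="\<lambda>t \<alpha>. f (pol (Suc t) \<alpha> (\<sigma> t)) (y t) - f (pol t \<alpha> (\<sigma> t)) (y t)"]) (rule hint)
  also have "\<dots> \<le> (\<Sum>t\<in>{1..T}. real N * (2 * real \<kappa> * \<rho>))"
    by (rule sum_mono) (rule hle)
  also have "\<dots> = 2 * real T * real N * real \<kappa> * \<rho>" by simp
  finally show ?thesis by (simp add: M_def I_def)
qed

end
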